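(* Let $G$ be a graph (possibly infinite) and $M$ a matching in $G$. Then $M$ has maximal support (i.e. there is no matching $N$ in $G$ with $supp(N)\supsetneq supp(M)$) if and only if there exists no finitely improving and no infinitely improving $M$-alternating path in $G$.
   Context: The support $supp(M)$ of a matching $M$ is the set of vertices incident with an edge of $M$. A path is $M$-alternating if of any two consecutive edges on it exactly one lies in $M$. An $M$-alternating path is finitely improving if it is finite, has at least one edge, and both its endpoints lie outside $supp(M)$. It is infinitely improving if it is a one-way infinite path (a ray, with exactly one endpoint) whose endpoint does not belong to $supp(M)$. *)

theory Defs
  imports Main
begin

definition graph :: "'a set set \<Rightarrow> bool" where
  "graph E \<longleftrightarrow> (\<forall>e\<in>E. \<exists>u v. u \<noteq> v \<and> e = {u, v})"

definition matching :: "'a set set \<Rightarrow> 'a set set \<Rightarrow> bool" where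
  "matching E M \<longleftrightarrow> M \<subseteq> E \<and> (\<forall>e\<in>M. \<forall>f\<in>M. e \<noteq> f \<longrightarrow> e \<inter> f = {})"

definition supp :: "'a set set \<Rightarrow> 'a set" where
  "supp M = \<Union>M"

definition max_support :: "'a set set \<Rightarrow> 'a set set \<Rightarrow> bool" where
  "max_support E M \<longleftrightarrow> \<not> (\<exists>N. matching E N \<and> supp M \<subset> supp N)"

definition fpath :: "'a set set \<Rightarrow> 'a list \<Rightarrow> bool" where
  "fpath E p \<longleftrightarrow> p \<noteq> [] \<and> distinct p \<and> (\<forall>i. Suc i < length p \<longrightarrow> {p ! i, p ! Suc i} \<in> E)"

definition alt_fpath :: "'a set set \<Rightarrow> 'a list \<Rightarrow> bool" where
  "alt_fpath M p \<longleftrightarrow> (\<forall>i. Suc (Suc i) < length p \<longrightarrow>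
      ({p ! i, p ! Suc i} \<in> M \<longleftrightarrow> {p ! Suc i, p ! Suc (Suc i)} \<notin> M))"

definition fin_improving :: "'a set set \<Rightarrow> 'a set set \<Rightarrow> 'a list \<Rightarrow> bool" where
  "fin_improving E M p \<longleftrightarrow> fpath E p \<and> alt_fpath M p \<and> length p \<ge> 2
     \<and> hd p \<notin> supp M \<and> last p \<notin> supp M"

definition ray :: "'a set set \<Rightarrow> (nat \<Rightarrow> 'a) \<Rightarrow> bool" where
  "ray E r \<longleftrightarrow> inj r \<and> (\<forall>i. {r i, r (Suc i)} \<in> E)"

definition alt_ray :: "'a set set \<Rightarrow> (nat \<Rightarrow> 'a) \<Rightarrow> bool" where
  "alt_ray M r \<longleftrightarrow> (\<forall>i. {r i, r (Suc i)} \<in> M \<longleftrightarrow> {r (Suc i), r (Suc (Suc i))} \<notin> M)"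

definition inf_improving :: "'a set set \<Rightarrow> 'a set set \<Rightarrow> (nat \<Rightarrow> 'a) \<Rightarrow> bool" where
  "inf_improving E M r \<longleftrightarrow> ray E r \<and> alt_ray M r \<and> r 0 \<notin> supp M"

end

theory Submission
  imports Defs
begin

lemma graph_edge_neq: "graph E \<Longrightarrow> {a,b} \<in> E \<Longrightarrow> a \<noteq> b"
  unfolding graph_def by (metis doubleton_eq_iff insert_absorb2)

lemma edge_form: "graph E \<Longrightarrow> e \<in> E \<Longrightarrow> a \<in> e \<Longrightarrow> \<exists>y. e = {a,y}"
proof -
  assume g: "graph E" and e: "e \<in> E" and a: "a \<in> e"
  obtain u v where uv: "e = {u,v}" using g e unfolding graph_def by blast
  show ?thesis
  proof (cases "a = u")
    case True then show ?thesis using uv by blast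
  next
    case False then have "a = v" using a uv by blast
    then show ?thesis using uv by (metis insert_commute)
  qed
qed

lemma match_unique: "matching E X \<Longrightarrow> {a,b} \<in> X \<Longrightarrow> {a,c} \<in> X \<Longrightarrow> b = c"
proof -
  assume m: "matching E X" and h: "{a,b} \<in> X" "{a,c} \<in> X"
  have d: "\<forall>e\<in>X. \<forall>f\<in>X. e \<noteq> f \<longrightarrow> e \<inter> f = {}" using m by (simp add: matching_def)
  have "a \<in> {a,b} \<inter> {a,c}" by simp
  then have "{a,b} = {a,c}" using d[rule_format, OF h] by auto
  thus "b = c" by (auto simp: doubleton_eq_iff)
qed

lemma supp_edge: "{a,b} \<in> X \<Longrightarrow> a \<in> supp X \<and> b \<in> supp X"
  by (auto simp: supp_def)

lemma supp_edge1: "{a,b} \<in> X \<Longrightarrow> a \<in> supp X"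
  by (auto simp: supp_def)

lemma supp_edge2: "{a,b} \<in> X \<Longrightarrow> b \<in> supp X"
  by (auto simp: supp_def)

lemma partner:
  assumes "graph E" "matching E X" "y \<in> supp X"
  shows "{y, SOME z. {y,z} \<in> X} \<in> X"
proof -
  obtain e where e: "e \<in> X" "y \<in> e" using assms(3) by (auto simp: supp_def)
  have "e \<in> E" using e assms(2) by (auto simp: matching_def)
  then obtain z where "e = {y,z}" using edge_form[OF assms(1)] e by blast
  hence "\<exists>z. {y,z} \<in> X" using e by blast
  thus ?thesis by (rule someI_ex)
qed

lemma walk_inj:
  assumes G: "graph E" and mM: "matching E M" and mN: "matching E N"
    and w0: "f 0 \<notin> supp M"
    and ed: "\<And>i. i < n \<Longrightarrow> {f i, f (Suc i)} \<in> (if even i then N else M)"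
  shows "j \<le> n \<Longrightarrow> i < j \<Longrightarrow> f i \<noteq> f j"
proof (induction j arbitrary: i rule: less_induct)
  case (less j)
  have mX: "\<And>k. matching E (if even k then N else M)" using mM mN by simp
  have XE: "\<And>k. (if even k then N else M) \<subseteq> E" using mM mN by (simp add: matching_def)
  have ne: "f k \<noteq> f (Suc k)" if k: "k < n" for k
  proof -
    have "{f k, f (Suc k)} \<in> E" using ed[OF k] XE[of k] by (rule subsetD[rotated])
    then show ?thesis by (rule graph_edge_neq[OF G])
  qed
  show ?case
  proof
    assume eq: "f i = f j"
    obtain m where jm: "j = Suc m" using less.prems by (cases j) auto
    have mn: "m < n" using jm less.prems by simp
    have em: "{f m, f j} \<in> (if even m then N else M)" using ed[OF mn] jm by simp
    have "i \<noteq> m" using ne[OF mn] eq jm by auto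
    hence im: "i < m" using less.prems jm by simp
    show False
    proof (cases i)
      case 0
      show False
      proof (cases "even m")
        case False
        then have M1: "{f m, f j} \<in> M" using em by simp
        have "f j \<in> supp M" using supp_edge[OF M1] by (rule conjunct2)
        moreover have "f j = f 0" using eq 0 by simp
        ultimately show False using w0 by simp
      next
        case True
        have fj: "f j = f 0" using eq 0 by simp
        have "{f m, f j} \<in> N" using em True by simp
        moreover have "{f m, f j} = {f 0, f m}" using fj by auto
        ultimately have a: "{f 0, f m} \<in> N" by simp
        have b: "{f 0, f 1} \<in> N" using ed[of 0] im 0 mn by simp
        have "f m = f 1" using match_unique[OF mN a b] .
        moreover have "1 < m"
        proof -
          have "m \<noteq> 1" using True by auto
          then show ?thesis using im 0 by simp
        qed
        ultimately show False using less.IH[of m 1] jm mn by simp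
      qed
    next
      case (Suc l)
      have el: "{f l, f i} \<in> (if even l then N else M)" using ed[of l] Suc im mn by simp
      have ei: "{f i, f (Suc i)} \<in> (if even i then N else M)" using ed[of i] im mn by simp
      show False
      proof (cases "even m = even l")
        case True
        have a: "{f j, f m} \<in> (if even m then N else M)" using em by (simp add: insert_commute)
        have b: "{f j, f l} \<in> (if even m then N else M)" using el eq True by (simp add: insert_commute)
        have "f m = f l" using match_unique[OF mX a b] .
        then show False using less.IH[of m l] jm mn Suc im by simp
      next
        case False
        then have pe: "even m = even i" using Suc by simp
        have a: "{f j, f m} \<in> (if even m then N else M)" using em by (simp add: insert_commute)
        have b: "{f j, f (Suc i)} \<in> (if even m then N else M)" using ei eq pe by simp
        have fm: "f m = f (Suc i)" using match_unique[OF mX a b] .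
        have "Suc i \<noteq> m" using pe by auto
        hence "Suc i < m" using im by simp
        then show False using less.IH[of m "Suc i"] jm mn fm by simp
      qed
    qed
  qed
qed

lemma walk_parity:
  assumes G: "graph E" and mM: "matching E M" and mN: "matching E N"
    and w0: "f 0 \<notin> supp M"
    and ed: "\<And>i. i < n \<Longrightarrow> {f i, f (Suc i)} \<in> (if even i then N else M)"
    and i: "i < n"
  shows "{f i, f (Suc i)} \<in> M \<longleftrightarrow> odd i"
proof (cases "odd i")
  case True then show ?thesis using ed[OF i] by simp
next
  case False
  show ?thesis
  proof (cases i)
    case 0
    have "{f i, f (Suc i)} \<notin> M"
    proof
      assume "{f i, f (Suc i)} \<in> M"
      then have "f i \<in> supp M" by (rule supp_edge1)
      then show False using w0 0 by simp
    qed
    then show ?thesis using False by simp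
  next
    case (Suc l)
    have lo: "odd l" using Suc False by simp
    have "{f l, f i} \<in> M" using ed[of l] Suc i lo by simp
    then have a: "{f i, f l} \<in> M" by (simp add: insert_commute)
    have "f l \<noteq> f (Suc i)" using walk_inj[OF G mM mN w0 ed, where j="Suc i" and i=l] Suc i by simp
    have "{f i, f (Suc i)} \<notin> M"
    proof
      assume "{f i, f (Suc i)} \<in> M"
      from match_unique[OF mM a this] show False using \<open>f l \<noteq> f (Suc i)\<close> by simp
    qed
    then show ?thesis using False by simp
  qed
qed

lemma augment:
  assumes G: "graph E" and mM: "matching E M"
    and inj: "inj_on f I"
    and dc: "\<And>i. Suc i \<in> I \<Longrightarrow> i \<in> I"
    and I1: "Suc 0 \<in> I"
    and ed: "\<And>i. Suc i \<in> I \<Longrightarrow> {f i, f (Suc i)} \<in> E"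
    and par: "\<And>i. Suc i \<in> I \<Longrightarrow> ({f i, f (Suc i)} \<in> M \<longleftrightarrow> odd i)"
    and f0: "f 0 \<notin> supp M"
    and ev: "\<And>k. k \<in> I \<Longrightarrow> even k \<Longrightarrow> Suc k \<in> I"
    and od: "\<And>k. k \<in> I \<Longrightarrow> odd k \<Longrightarrow> Suc k \<notin> I \<Longrightarrow> f k \<notin> supp M"
  shows "\<exists>N. matching E N \<and> supp M \<subset> supp N"
proof -
  define N where "N = {e \<in> M. e \<inter> f ` I = {}} \<union> {{f i, f (Suc i)} | i. Suc i \<in> I \<and> even i}"
  have ME: "M \<subseteq> E" using mM by (simp add: matching_def)
  have NE: "N \<subseteq> E" using ME ed unfolding N_def by blast
  have disj: "\<forall>e\<in>N. \<forall>e'\<in>N. e \<noteq> e' \<longrightarrow> e \<inter> e' = {}"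
  proof (intro ballI impI)
    fix e e' assume e: "e \<in> N" and e': "e' \<in> N" and ne: "e \<noteq> e'"
    show "e \<inter> e' = {}"
    proof (cases "e \<in> M \<and> e \<inter> f ` I = {}")
      case True
      show ?thesis
      proof (cases "e' \<in> M \<and> e' \<inter> f ` I = {}")
        case True
        then show ?thesis using \<open>e \<in> M \<and> _\<close> ne mM unfolding matching_def by blast
      next
        case False
        then obtain j where "e' = {f j, f (Suc j)}" "Suc j \<in> I" using e' unfolding N_def by blast
        then show ?thesis using True dc by blast
      qed
    next
      case False
      then obtain i where ei: "e = {f i, f (Suc i)}" "Suc i \<in> I" "even i" using e unfolding N_def by blast
      show ?thesis
      proof (cases "e' \<in> M \<and> e' \<inter> f ` I = {}")
        case True
        then show ?thesis using ei dc by blast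
      next
        case False
        then obtain j where ej: "e' = {f j, f (Suc j)}" "Suc j \<in> I" "even j" using e' unfolding N_def by blast
        have ij: "i \<noteq> j" using ei ej ne by auto
        have iI: "i \<in> I" "j \<in> I" using ei ej dc by auto
        have "f i \<noteq> f j" using inj_onD[OF inj _ iI] ij by blast
        moreover have "f i \<noteq> f (Suc j)" using inj_onD[OF inj _ iI(1) ej(2)] ei(3) ej(3) by auto
        moreover have "f (Suc i) \<noteq> f j" using inj_onD[OF inj _ ei(2) iI(2)] ei(3) ej(3) by auto
        moreover have "f (Suc i) \<noteq> f (Suc j)" using inj_onD[OF inj _ ei(2) ej(2)] ij by auto
        ultimately show ?thesis using ei ej by auto
      qed
    qed
  qed
  have mN: "matching E N" using NE disj by (simp add: matching_def)
  have fI: "f ` I \<subseteq> supp N"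
  proof
    fix x assume "x \<in> f ` I"
    then obtain k where k: "k \<in> I" "x = f k" by blast
    show "x \<in> supp N"
    proof (cases "even k")
      case True
      then have "{f k, f (Suc k)} \<in> N" using ev[OF k(1)] unfolding N_def by blast
      then show ?thesis using supp_edge1 k(2) by simp
    next
      case False
      then obtain l where l: "k = Suc l" "even l" by (cases k) auto
      then have "{f l, f k} \<in> N" using k unfolding N_def by blast
      then show ?thesis using supp_edge2 k(2) by simp
    qed
  qed
  have sub: "supp M \<subseteq> supp N"
  proof
    fix x assume "x \<in> supp M"
    then obtain e where e: "e \<in> M" "x \<in> e" by (auto simp: supp_def)
    show "x \<in> supp N"
    proof (cases "e \<inter> f ` I = {}")
      case True
      then have "e \<in> N" using e unfolding N_def by blast
      then show ?thesis using e by (auto simp: supp_def)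
    next
      case False
      then obtain k where k: "k \<in> I" "f k \<in> e" by blast
      have kM: "f k \<in> supp M" using k e by (auto simp: supp_def)
      obtain y where ey: "e = {f k, y}" using edge_form[OF G _ k(2)] e ME by blast
      have "e \<subseteq> f ` I"
      proof (cases "even k")
        case True
        have "k \<noteq> 0"
        proof
          assume "k = 0" then show False using kM f0 by simp
        qed
        then obtain l where l: "k = Suc l" "odd l" using True by (cases k) auto
        have "{f k, f l} \<in> M" using par[of l] l k by (simp add: insert_commute)
        then have "y = f l" using match_unique[OF mM] e ey by blast
        then show ?thesis using ey k l dc by blast
      next
        case False
        have "Suc k \<in> I" using od[OF k(1) False] kM by blast
        then have "{f k, f (Suc k)} \<in> M" using par False by simp
        then have "y = f (Suc k)" using match_unique[OF mM] e ey by blast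
        then show ?thesis using ey k \<open>Suc k \<in> I\<close> by blast
      qed
      then show ?thesis using e fI by blast
    qed
  qed
  have "f 0 \<in> supp N" using fI dc I1 by blast
  then have "supp M \<subset> supp N" using sub f0 by blast
  then show ?thesis using mN by blast
qed

primrec walk :: "'a set set \<Rightarrow> 'a set set \<Rightarrow> 'a \<Rightarrow> nat \<Rightarrow> 'a" where
  "walk M N v 0 = v"
| "walk M N v (Suc n) = (SOME z. {walk M N v n, z} \<in> (if even n then N else M))"

lemma walk_edges:
  assumes G: "graph E" and mM: "matching E M" and mN: "matching E N"
    and v: "v \<in> supp N" and sub: "supp M \<subseteq> supp N"
  shows "(\<forall>j<n. odd j \<longrightarrow> walk M N v j \<in> supp M) \<Longrightarrow> i < n \<Longrightarrow>
     {walk M N v i, walk M N v (Suc i)} \<in> (if even i then N else M)"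
proof (induction n arbitrary: i)
  case 0 then show ?case by simp
next
  case (Suc n)
  show ?case
  proof (cases "i < n")
    case True then show ?thesis using Suc by simp
  next
    case False
    then have i: "i = n" using Suc by simp
    have "walk M N v n \<in> supp (if even n then N else M)"
    proof (cases "even n")
      case True
      show ?thesis
      proof (cases n)
        case 0 then show ?thesis using v by simp
      next
        case (Suc m)
        then have "{walk M N v m, walk M N v n} \<in> M" using Suc.IH[of m] Suc.prems True by simp
        then have "walk M N v n \<in> supp M" by (rule supp_edge2)
        then show ?thesis using sub True by auto
      qed
    next
      case False then show ?thesis using Suc.prems by simp
    qed
    then have "{walk M N v n, SOME z. {walk M N v n, z} \<in> (if even n then N else M)}
        \<in> (if even n then N else M)"
      using partner[OF G] mM mN by (cases "even n") auto
    then show ?thesis using i by simp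
  qed
qed

theorem lemma3p3:
  fixes E M :: "'a set set"
  assumes "graph E" and "matching E M"
  shows "max_support E M \<longleftrightarrow>
           (\<not> (\<exists>p. fin_improving E M p) \<and> \<not> (\<exists>r. inf_improving E M r))"
proof
  assume ms: "max_support E M"
  have nf: "\<not> fin_improving E M p" for p
  proof
    assume fi: "fin_improving E M p"
    have fp: "fpath E p" and ap: "alt_fpath M p" and len: "length p \<ge> 2"
      and hd: "hd p \<notin> supp M" and la: "last p \<notin> supp M"
      using fi by (auto simp: fin_improving_def)
    have p0: "p ! 0 \<notin> supp M" using hd fp by (simp add: fpath_def hd_conv_nth)
    have par: "Suc i < length p \<Longrightarrow> ({p ! i, p ! Suc i} \<in> M \<longleftrightarrow> odd i)" for i
    proof (induction i)
      case 0
      have "{p ! 0, p ! Suc 0} \<notin> M" using p0 supp_edge1 by metis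
      then show ?case by simp
    next
      case (Suc i)
      then have "Suc i < length p" by simp
      then have "{p ! i, p ! Suc i} \<in> M \<longleftrightarrow> odd i" using Suc.IH by simp
      moreover have "{p ! i, p ! Suc i} \<in> M \<longleftrightarrow> {p ! Suc i, p ! Suc (Suc i)} \<notin> M"
        using ap Suc.prems unfolding alt_fpath_def by blast
      ultimately show ?case by simp
    qed
    have lastp: "p ! (length p - 1) \<notin> supp M" using la fp by (simp add: fpath_def last_conv_nth)
    have "\<exists>N. matching E N \<and> supp M \<subset> supp N"
    proof (rule augment[OF assms(1,2), of "(!) p" "{..<length p}"])
      show "inj_on ((!) p) {..<length p}" using fp by (simp add: fpath_def inj_on_nth)
      show "Suc 0 \<in> {..<length p}" using len by simp
      show "\<And>i. Suc i \<in> {..<length p} \<Longrightarrow> {p ! i, p ! Suc i} \<in> E" using fp by (simp add: fpath_def)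
      show "\<And>i. Suc i \<in> {..<length p} \<Longrightarrow> ({p ! i, p ! Suc i} \<in> M) = odd i" using par by simp
      show "p ! 0 \<notin> supp M" by (rule p0)
      show "\<And>k. k \<in> {..<length p} \<Longrightarrow> even k \<Longrightarrow> Suc k \<in> {..<length p}"
      proof -
        fix k assume k: "k \<in> {..<length p}" "even k"
        show "Suc k \<in> {..<length p}"
        proof (rule ccontr)
          assume "Suc k \<notin> {..<length p}"
          then have kl: "k = length p - 1" using k by simp
          have "k \<ge> 1" using len kl by simp
          then obtain l where l: "k = Suc l" by (cases k) auto
          then have "{p ! l, p ! k} \<in> M" using par[of l] k kl len by simp
          then have "p ! k \<in> supp M" by (rule supp_edge2)
          then show False using lastp kl by simp
        qed
      qed
      show "\<And>k. k \<in> {..<length p} \<Longrightarrow> odd k \<Longrightarrow> Suc k \<notin> {..<length p} \<Longrightarrow> p ! k \<notin> supp M"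
      proof -
        fix k assume "k \<in> {..<length p}" "Suc k \<notin> {..<length p}"
        then have "k = length p - 1" by simp
        then show "p ! k \<notin> supp M" using lastp by simp
      qed
    qed auto
    then show False using ms by (simp add: max_support_def)
  qed
  have ni: "\<not> inf_improving E M r" for r
  proof
    assume ii: "inf_improving E M r"
    have ry: "ray E r" and ar: "alt_ray M r" and r0: "r 0 \<notin> supp M"
      using ii by (auto simp: inf_improving_def)
    have par: "{r i, r (Suc i)} \<in> M \<longleftrightarrow> odd i" for i
    proof (induction i)
      case 0
      have "{r 0, r (Suc 0)} \<notin> M" using r0 supp_edge1 by metis
      then show ?case by simp
    next
      case (Suc i)
      have "({r i, r (Suc i)} \<in> M) = ({r (Suc i), r (Suc (Suc i))} \<notin> M)"
        using ar unfolding alt_ray_def by blast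
      then show ?case using Suc.IH by simp
    qed
    have "\<exists>N. matching E N \<and> supp M \<subset> supp N"
      by (rule augment[OF assms(1,2), of r UNIV]) (use ry par r0 in \<open>auto simp: ray_def\<close>)
    then show False using ms by (simp add: max_support_def)
  qed
  show "\<not> (\<exists>p. fin_improving E M p) \<and> \<not> (\<exists>r. inf_improving E M r)" using nf ni by blast
next
  assume h: "\<not> (\<exists>p. fin_improving E M p) \<and> \<not> (\<exists>r. inf_improving E M r)"
  show "max_support E M"
  proof (rule ccontr)
    assume "\<not> max_support E M"
    then obtain N where mN: "matching E N" and ss: "supp M \<subset> supp N"
      by (auto simp: max_support_def)
    then obtain v where v: "v \<in> supp N" "v \<notin> supp M" by blast
    define w where "w = walk M N v"
    have w0: "w 0 \<notin> supp M" using v by (simp add: w_def)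
    have wE: "(\<forall>j<n. odd j \<longrightarrow> w j \<in> supp M) \<Longrightarrow> i < n \<Longrightarrow>
       {w i, w (Suc i)} \<in> (if even i then N else M)" for n i
      unfolding w_def using walk_edges[OF assms(1,2) mN v(1)] ss by blast
    have XE: "\<And>k. (if even k then N else M) \<subseteq> E" using assms(2) mN by (simp add: matching_def)
    show False
    proof (cases "\<exists>k. odd k \<and> w k \<notin> supp M")
      case True
      then obtain k where k: "odd k" "w k \<notin> supp M" and kl: "\<forall>j<k. \<not> (odd j \<and> w j \<notin> supp M)"
        using exists_least_iff[of "\<lambda>k. odd k \<and> w k \<notin> supp M"] by blast
      have ed: "\<And>i. i < k \<Longrightarrow> {w i, w (Suc i)} \<in> (if even i then N else M)"
        using wE kl by blast
      have inj: "j \<le> k \<Longrightarrow> i < j \<Longrightarrow> w i \<noteq> w j" for i j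
        using walk_inj[OF assms(1,2) mN w0 ed] by blast
      have par: "i < k \<Longrightarrow> ({w i, w (Suc i)} \<in> M \<longleftrightarrow> odd i)" for i
        using walk_parity[OF assms(1,2) mN w0 ed] by blast
      define p where "p = map w [0..<Suc k]"
      have pn: "i < Suc k \<Longrightarrow> p ! i = w i" for i unfolding p_def by (simp del: upt_Suc)
      have lp: "length p = Suc k" unfolding p_def by simp
      have "inj_on w {0..<Suc k}"
      proof (rule inj_onI)
        fix a b assume ab: "a \<in> {0..<Suc k}" "b \<in> {0..<Suc k}" "w a = w b"
        show "a = b"
        proof (cases a b rule: linorder_cases)
          case less then show ?thesis using inj[of b a] ab by simp
        next
          case greater then show ?thesis using inj[of a b] ab by simp
        qed
      qed
      then have dp: "distinct p" unfolding p_def by (simp add: distinct_map del: upt_Suc)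
      have k1: "k \<ge> 1" using k by (cases k) auto
      have "fin_improving E M p"
        unfolding fin_improving_def fpath_def alt_fpath_def
      proof (intro conjI allI impI)
        show "p \<noteq> []" using lp by auto
        show "distinct p" by (rule dp)
        fix i assume "Suc i < length p"
        then show "{p ! i, p ! Suc i} \<in> E" using ed[of i] XE[of i] lp pn by auto
      next
        fix i assume i: "Suc (Suc i) < length p"
        show "({p ! i, p ! Suc i} \<in> M) = ({p ! Suc i, p ! Suc (Suc i)} \<notin> M)"
          using par[of i] par[of "Suc i"] i lp pn by simp
      next
        show "2 \<le> length p" using lp k1 by simp
        have pne: "p \<noteq> []" using lp by auto
        show "hd p \<notin> supp M" using w0 pn[of 0] hd_conv_nth[OF pne] by simp
        show "last p \<notin> supp M" using k(2) pn[of k] lp last_conv_nth[OF pne] by simp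
      qed
      then show False using h by blast
    next
      case False
      then have edall: "{w i, w (Suc i)} \<in> (if even i then N else M)" for i
        using wE[of "Suc i" i] by blast
      have inj: "inj w"
      proof (rule injI)
        fix a b assume ab: "w a = w b"
        show "a = b"
        proof (cases a b rule: linorder_cases)
          case less
          have "\<And>i. i < b \<Longrightarrow> {w i, w (Suc i)} \<in> (if even i then N else M)" using edall by blast
          from walk_inj[OF assms(1,2) mN w0 this, where j=b and i=a] have "w a \<noteq> w b" using less by simp
          then show ?thesis using ab by simp
        next
          case greater
          have "\<And>i. i < a \<Longrightarrow> {w i, w (Suc i)} \<in> (if even i then N else M)" using edall by blast
          from walk_inj[OF assms(1,2) mN w0 this, where j=a and i=b] have "w b \<noteq> w a" using greater by simp
          then show ?thesis using ab by simp
        qed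
      qed
      have par: "({w i, w (Suc i)} \<in> M \<longleftrightarrow> odd i)" for i
      proof -
        have "\<And>j. j < Suc i \<Longrightarrow> {w j, w (Suc j)} \<in> (if even j then N else M)" using edall by blast
        from walk_parity[OF assms(1,2) mN w0 this, where i=i] show ?thesis by simp
      qed
      have "inf_improving E M w"
        unfolding inf_improving_def ray_def alt_ray_def
      proof (intro conjI allI)
        fix i
        have "{w i, w (Suc i)} \<in> (if even i then N else M)" by (rule edall)
        then show "{w i, w (Suc i)} \<in> E" using XE[of i] by blast
        show "({w i, w (Suc i)} \<in> M) = ({w (Suc i), w (Suc (Suc i))} \<notin> M)"
          using par[of i] par[of "Suc i"] by simp
      qed (use inj w0 in auto)
      then show False using h by blast
    qed
  qed
qed

end
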